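(* Let $\delta_1,\delta_2>0$, $0<\lambda<\tfrac12$, $0<\alpha_1<1-2\lambda$ and $1-2\lambda<\alpha_2<1$, and consider the ODEs on $\mathbb{R}^3_+=\{(x_1,x_2,s):x_1,x_2,s>0\}$ $$\dot x_j=\delta_j\frac{s-\lambda}{s+\alpha_j}x_j\ (j=1,2),\qquad \dot s=s(1-s)-\frac{s}{s+\alpha_1}x_1-\frac{s}{s+\alpha_2}x_2.$$ These possess the line of equilibria $L=\{(x_1,x_2,\lambda)\in\mathbb{R}^3_+: \frac{x_1}{\lambda+\alpha_1}+\frac{x_2}{\lambda+\alpha_2}=1-\lambda\}$. Then the point $$X_H=\left(\frac{(\lambda+\alpha_1)^2(2\lambda+\alpha_2-1)}{\alpha_2-\alpha_1},\ \frac{(\lambda+\alpha_2)^2(1-2\lambda-\alpha_1)}{\alpha_2-\alpha_1},\ \lambda\right)\in L$$ is an elliptic Hopf point.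
   Context: A point $X_H$ on a line of equilibria $L$ of a smooth 3-dimensional ODE is a Hopf point if, after an affine linear change of coordinates $X=(y,z)\in\mathbb{R}^2\times\mathbb{R}$ placing $X_H$ at the origin and $L$ on $\{y=0\}$, the vector field $F=(f^y,f^z)$ satisfies $F(0,z)=0$ for all $z$, its Jacobian at the origin is $\begin{pmatrix}0&-\omega&0\\ \omega&0&0\\0&0&0\end{pmatrix}$ for some $\omega>0$, and $\partial_z(\partial_{y_1}f^{y_1}+\partial_{y_2}f^{y_2})(0,0)\neq0$. It is called elliptic if in addition $\Delta_yf^z(0,0)\neq0$ (with $\Delta_y=\partial_{y_1}^2+\partial_{y_2}^2$) and the discriminant $\xi=\mathrm{sign}\big(\partial_z(\partial_{y_1}f^{y_1}+\partial_{y_2}f^{y_2})(0,0)\cdot\Delta_yf^z(0,0)\big)$ equals $-1$ (hyperbolic if $\xi=1$). *)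

theory Defs
  imports "HOL-Analysis.Analysis"
begin

definition dpart :: "3 \<Rightarrow> (real^3 \<Rightarrow> real) \<Rightarrow> real^3 \<Rightarrow> real" where
  "dpart i f u = deriv (\<lambda>t. f (u + t *\<^sub>R axis i 1)) 0"

fun ipart :: "3 list \<Rightarrow> (real^3 \<Rightarrow> real) \<Rightarrow> real^3 \<Rightarrow> real" where
  "ipart [] f = f"
| "ipart (i # is) f = dpart i (ipart is f)"

definition smooth_on :: "(real^3) set \<Rightarrow> (real^3 \<Rightarrow> real) \<Rightarrow> bool" where
  "smooth_on D f \<longleftrightarrow> open D \<and>
     (\<forall>is. continuous_on D (ipart is f)) \<and>
     (\<forall>is i. \<forall>u\<in>D. (\<lambda>t. ipart is f (u + t *\<^sub>R axis i 1)) differentiable (at 0))"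

definition smooth_field_on :: "(real^3) set \<Rightarrow> (real^3 \<Rightarrow> real^3) \<Rightarrow> bool" where
  "smooth_field_on D F \<longleftrightarrow> (\<forall>k. smooth_on D (\<lambda>u. F u $ k))"

(* Vector field in the new coordinates u = (y1,y2,z), where X = A u + X0 *)
definition transf :: "real^3^3 \<Rightarrow> real^3 \<Rightarrow> (real^3 \<Rightarrow> real^3) \<Rightarrow> real^3 \<Rightarrow> real^3" where
  "transf A X0 F = (\<lambda>u. matrix_inv A *v F (A *v u + X0))"

definition hopf_jac :: "real \<Rightarrow> real^3^3" where
  "hopf_jac \<omega> = vector [vector [0, -\<omega>, 0], vector [\<omega>, 0, 0], vector [0, 0, 0]]"

definition hopf_coords ::
  "(real^3) set \<Rightarrow> (real^3 \<Rightarrow> real^3) \<Rightarrow> (real^3) set \<Rightarrow> real^3 \<Rightarrow> real^3^3 \<Rightarrow> real \<Rightarrow> bool" where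
  "hopf_coords D F L X0 A \<omega> \<longleftrightarrow>
     smooth_field_on D F \<and> L \<subseteq> D \<and> (\<forall>Y\<in>L. F Y = 0) \<and> X0 \<in> L \<and>
     invertible A \<and> \<omega> > 0 \<and>
     L \<subseteq> {A *v u + X0 | u. u $ 1 = 0 \<and> u $ 2 = 0} \<and>
     (\<forall>u. u $ 1 = 0 \<and> u $ 2 = 0 \<longrightarrow> transf A X0 F u = 0) \<and>
     (\<forall>i j. dpart j (\<lambda>u. transf A X0 F u $ i) 0 = hopf_jac \<omega> $ i $ j) \<and>
     ipart [3, 1] (\<lambda>u. transf A X0 F u $ 1) 0 + ipart [3, 2] (\<lambda>u. transf A X0 F u $ 2) 0 \<noteq> 0"

definition hopf_point ::
  "(real^3) set \<Rightarrow> (real^3 \<Rightarrow> real^3) \<Rightarrow> (real^3) set \<Rightarrow> real^3 \<Rightarrow> bool" where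
  "hopf_point D F L X0 \<longleftrightarrow> (\<exists>A \<omega>. hopf_coords D F L X0 A \<omega>)"

definition elliptic_hopf_point ::
  "(real^3) set \<Rightarrow> (real^3 \<Rightarrow> real^3) \<Rightarrow> (real^3) set \<Rightarrow> real^3 \<Rightarrow> bool" where
  "elliptic_hopf_point D F L X0 \<longleftrightarrow> (\<exists>A \<omega>. hopf_coords D F L X0 A \<omega> \<and>
     (let G = transf A X0 F;
          a = ipart [3, 1] (\<lambda>u. G u $ 1) 0 + ipart [3, 2] (\<lambda>u. G u $ 2) 0;
          b = ipart [1, 1] (\<lambda>u. G u $ 3) 0 + ipart [2, 2] (\<lambda>u. G u $ 3) 0
      in b \<noteq> 0 \<and> sgn (a * b) = -1))"

definition pos3 :: "(real^3) set" where
  "pos3 = {X. X $ 1 > 0 \<and> X $ 2 > 0 \<and> X $ 3 > 0}"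

definition chemo_F :: "real \<Rightarrow> real \<Rightarrow> real \<Rightarrow> real \<Rightarrow> real \<Rightarrow> real^3 \<Rightarrow> real^3" where
  "chemo_F d1 d2 lam a1 a2 = (\<lambda>X. vector
     [d1 * (X $ 3 - lam) / (X $ 3 + a1) * X $ 1,
      d2 * (X $ 3 - lam) / (X $ 3 + a2) * X $ 2,
      X $ 3 * (1 - X $ 3) - X $ 3 / (X $ 3 + a1) * X $ 1 - X $ 3 / (X $ 3 + a2) * X $ 2])"

definition chemo_L :: "real \<Rightarrow> real \<Rightarrow> real \<Rightarrow> (real^3) set" where
  "chemo_L lam a1 a2 = {X \<in> pos3. X $ 3 = lam \<and> X $ 1 / (lam + a1) + X $ 2 / (lam + a2) = 1 - lam}"

end

theory Submission
  imports Defs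
begin

inductive nice :: "(real^3) set \<Rightarrow> (real^3 \<Rightarrow> real) \<Rightarrow> bool" for D where
  nconst: "nice D (\<lambda>u. c)"
| ncoord: "nice D (\<lambda>u. u $ k)"
| nadd: "nice D f \<Longrightarrow> nice D g \<Longrightarrow> nice D (\<lambda>u. f u + g u)"
| nmult: "nice D f \<Longrightarrow> nice D g \<Longrightarrow> nice D (\<lambda>u. f u * g u)"
| ninv: "nice D f \<Longrightarrow> (\<forall>u\<in>D. f u \<noteq> 0) \<Longrightarrow> nice D (\<lambda>u. inverse (f u))"
| ncong: "nice D f \<Longrightarrow> (\<forall>u\<in>D. f u = g u) \<Longrightarrow> nice D g"

lemma nice_cont: "nice D f \<Longrightarrow> continuous_on D f"
proof (induction rule: nice.induct)
  case (ncong f g) then show ?case using continuous_on_cong by blast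
qed (auto intro!: continuous_intros)

lemma axis_comp: "(u + t *\<^sub>R axis i 1) $ k = u $ k + (if k = i then t else 0)"
  by (simp add: Finite_Cartesian_Product.axis_def)

lemma axis_comp2: "axis i (1::real) $ k = (if k = i then 1 else 0)"
  by (simp add: Finite_Cartesian_Product.axis_def)

lemma nice_deriv:
  assumes "nice D f" "open D"
  shows "\<exists>f'. nice D f' \<and> (\<forall>u\<in>D. ((\<lambda>t. f (u + t *\<^sub>R axis i 1)) has_real_derivative f' u) (at 0))"
  using assms(1)
proof (induction rule: nice.induct)
  case (nconst c)
  then show ?case by (intro exI[of _ "\<lambda>u. 0"]) (auto intro: nice.nconst)
next
  case (ncoord k)
  show ?case
    by (intro exI[of _ "\<lambda>u. if k = i then 1 else 0"])
       (auto simp: axis_comp2 intro!: nice.nconst derivative_eq_intros)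
next
  case (nadd f g)
  then obtain f' g' where "nice D f'" "nice D g'"
    and "\<forall>u\<in>D. ((\<lambda>t. f (u + t *\<^sub>R axis i 1)) has_real_derivative f' u) (at 0)"
        "\<forall>u\<in>D. ((\<lambda>t. g (u + t *\<^sub>R axis i 1)) has_real_derivative g' u) (at 0)" by blast
  then show ?case
    by (intro exI[of _ "\<lambda>u. f' u + g' u"]) (auto intro!: nice.nadd derivative_eq_intros)
next
  case (nmult f g)
  then obtain f' g' where "nice D f'" "nice D g'"
    and df: "\<forall>u\<in>D. ((\<lambda>t. f (u + t *\<^sub>R axis i 1)) has_real_derivative f' u) (at 0)"
    and dg: "\<forall>u\<in>D. ((\<lambda>t. g (u + t *\<^sub>R axis i 1)) has_real_derivative g' u) (at 0)" by blast
  have "((\<lambda>t. f (u + t *\<^sub>R axis i 1) * g (u + t *\<^sub>R axis i 1)) has_real_derivative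
          f' u * g u + f u * g' u) (at 0)" if "u \<in> D" for u
    using DERIV_mult[OF df[rule_format, OF that] dg[rule_format, OF that]] by (simp add: mult.commute)
  then show ?case
    by (intro exI[of _ "\<lambda>u. f' u * g u + f u * g' u"])
       (auto intro!: nice.nadd nice.nmult nmult.hyps nmult.prems \<open>nice D f'\<close> \<open>nice D g'\<close>)
next
  case (ninv f)
  then obtain f' where "nice D f'"
    and df: "\<forall>u\<in>D. ((\<lambda>t. f (u + t *\<^sub>R axis i 1)) has_real_derivative f' u) (at 0)" by blast
  have "((\<lambda>t. inverse (f (u + t *\<^sub>R axis i 1))) has_real_derivative
          (- 1) * f' u * (inverse (f u) * inverse (f u))) (at 0)" if "u \<in> D" for u
    using DERIV_inverse_fun[OF df[rule_format, OF that]] ninv.hyps(2) that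
    by (simp add: power2_eq_square divide_inverse)
  moreover have "nice D (\<lambda>u. (- 1) * f' u * (inverse (f u) * inverse (f u)))"
    by (rule nmult[OF nmult[OF nconst \<open>nice D f'\<close>] nmult[OF nice.ninv[OF ninv.hyps] nice.ninv[OF ninv.hyps]]])
  ultimately show ?case
    by (intro exI[of _ "\<lambda>u. (- 1) * f' u * (inverse (f u) * inverse (f u))"]) blast
next
  case (ncong f g)
  then obtain f' where "nice D f'"
    and df: "\<forall>u\<in>D. ((\<lambda>t. f (u + t *\<^sub>R axis i 1)) has_real_derivative f' u) (at 0)" by blast
  have "((\<lambda>t. g (u + t *\<^sub>R axis i 1)) has_real_derivative f' u) (at 0)" if uD: "u \<in> D" for u
  proof -
    obtain e where e: "e > 0" "ball u e \<subseteq> D" using assms(2) uD by (meson open_contains_ball)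
    show ?thesis
    proof (rule has_field_derivative_transform_within_open[OF df[rule_format, OF uD], of "ball 0 e"])
      fix t :: real assume "t \<in> ball 0 e"
      then have "u + t *\<^sub>R axis i 1 \<in> ball u e" by (simp add: dist_norm)
      then show "f (u + t *\<^sub>R axis i 1) = g (u + t *\<^sub>R axis i 1)" using e ncong.hyps(2) by blast
    qed (use e in auto)
  qed
  then show ?case using \<open>nice D f'\<close> by (intro exI[of _ f']) simp
qed

lemma nice_ipart: "open D \<Longrightarrow> nice D f \<Longrightarrow> nice D (ipart is f)"
proof (induction "is")
  case Nil then show ?case by simp
next
  case (Cons i "is")
  then have "nice D (ipart is f)" by simp
  from nice_deriv[OF this Cons.prems(1), of i] obtain f' where "nice D f'"
    and df: "\<forall>u\<in>D. ((\<lambda>t. ipart is f (u + t *\<^sub>R axis i 1)) has_real_derivative f' u) (at 0)" by blast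
  have "\<forall>u\<in>D. f' u = ipart (i # is) f u"
    using df by (auto simp: dpart_def intro: DERIV_imp_deriv[symmetric])
  then show ?case using ncong[OF \<open>nice D f'\<close>] by blast
qed

lemma nice_smooth: "open D \<Longrightarrow> nice D f \<Longrightarrow> smooth_on D f"
  unfolding smooth_on_def
proof (intro conjI allI ballI)
  fix "is" assume "open D" "nice D f"
  then show "continuous_on D (ipart is f)" using nice_ipart nice_cont by blast
next
  fix "is" i u assume "open D" "nice D f" "u \<in> D"
  from nice_deriv[OF nice_ipart[OF this(1,2), of "is"] this(1), of i] this(3)
  show "(\<lambda>t. ipart is f (u + t *\<^sub>R axis i 1)) differentiable (at 0)"
    using real_differentiable_def by blast
qed

lemma nice_diff: "nice D f \<Longrightarrow> nice D g \<Longrightarrow> nice D (\<lambda>u. f u - g u)"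
proof -
  assume "nice D f" "nice D g"
  then have "nice D (\<lambda>u. f u + (-1) * g u)" by (intro nadd nmult[OF nconst])
  then show ?thesis by (rule ncong) simp
qed

lemma nice_div: "nice D f \<Longrightarrow> nice D g \<Longrightarrow> \<forall>u\<in>D. g u \<noteq> 0 \<Longrightarrow> nice D (\<lambda>u. f u / g u)"
proof -
  assume "nice D f" "nice D g" "\<forall>u\<in>D. g u \<noteq> 0"
  then have "nice D (\<lambda>u. f u * inverse (g u))" by (intro nmult ninv)
  then show ?thesis by (rule ncong) (simp add: divide_inverse)
qed

lemma open_pos3: "open pos3"
proof -
  have "pos3 = {X::real^3. X$1 > 0} \<inter> {X. X$2 > 0} \<inter> {X. X$3 > 0}" by (auto simp: pos3_def)
  then show ?thesis by (metis open_Int open_halfspace_component_gt_cart)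
qed

lemma chemo_smooth:
  assumes "a1 > 0" "a2 > 0"
  shows "smooth_field_on pos3 (chemo_F d1 d2 lam a1 a2)"
  unfolding smooth_field_on_def
proof
  fix k :: 3
  have p: "\<forall>u\<in>pos3. u $ 3 + a1 \<noteq> 0" "\<forall>u\<in>pos3. u $ 3 + a2 \<noteq> 0"
    using assms by (auto simp: pos3_def add_pos_pos dest: less_imp_neq[symmetric])
  have "nice pos3 (\<lambda>u. chemo_F d1 d2 lam a1 a2 u $ k)"
    using exhaust_3[of k]
    apply (elim disjE)
    apply (simp_all add: chemo_F_def)
    apply (intro nconst ncoord nadd nmult nice_diff nice_div p)+
    done
  then show "smooth_on pos3 (\<lambda>u. chemo_F d1 d2 lam a1 a2 u $ k)"
    using nice_smooth open_pos3 by blast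
qed

lemma transf_explicit:
  fixes A B :: "real^3^3"
  assumes "A ** B = mat 1" "B ** A = mat 1"
  shows "transf A X0 F u = B *v F (A *v u + X0)"
proof -
  have "matrix_inv A = B"
    unfolding matrix_inv_def
  proof (rule some_equality)
    fix A' :: "real^3^3" assume "A ** A' = mat 1 \<and> A' ** A = mat 1"
    then have "A' = A' ** (A ** B)" "A' ** A = mat 1" by (simp_all add: assms matrix_mul_rid)
    then show "A' = B" by (simp add: matrix_mul_assoc matrix_mul_lid)
  qed (use assms in auto)
  then show ?thesis by (simp add: transf_def)
qed

lemma mat_AB:
  fixes p1 p2 k1 k2 w DD :: real
  assumes "A = (vector [vector [0,p1,k1], vector[0,p2,-k2], vector[w,0,0]] :: real^3^3)"
   "B = (vector [vector [0,0,1/w], vector [k2/DD, k1/DD, 0], vector [p2/DD, -p1/DD, 0]] :: real^3^3)"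
   "DD = p2*k1 + p1*k2" "DD \<noteq> 0" "w \<noteq> 0"
  shows "A ** B = mat 1 \<and> B ** A = mat 1"
  unfolding assms(1,2) using assms(3-)
  apply (simp add: vec_eq_iff forall_3 matrix_matrix_mult_def sum_3 mat_def)
  apply (simp add: add_divide_distrib[symmetric] algebra_simps)
  done

theorem lemma1:
  fixes d1 d2 lam a1 a2 :: real
  assumes "d1 > 0" "d2 > 0" "0 < lam" "lam < 1/2"
    and "0 < a1" "a1 < 1 - 2*lam" "1 - 2*lam < a2" "a2 < 1"
  defines "XH \<equiv> (vector [(lam + a1)^2 * (2*lam + a2 - 1) / (a2 - a1),
                          (lam + a2)^2 * (1 - 2*lam - a1) / (a2 - a1),
                          lam] :: real^3)"
  shows "XH \<in> chemo_L lam a1 a2 \<and>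
         elliptic_hopf_point pos3 (chemo_F d1 d2 lam a1 a2) (chemo_L lam a1 a2) XH"
proof -
  define k1 where "k1 = lam + a1"
  define k2 where "k2 = lam + a2"
  define x1 where "x1 = k1^2 * (2*lam + a2 - 1) / (a2 - a1)"
  define x2 where "x2 = k2^2 * (1 - 2*lam - a1) / (a2 - a1)"
  define p1 where "p1 = d1 * x1 / k1"
  define p2 where "p2 = d2 * x2 / k2"
  define w where "w = sqrt (p1 * lam / k1 + p2 * lam / k2)"
  define DD where "DD = p2 * k1 + p1 * k2"
  have k1: "k1 > 0" and k2: "k2 > 0" and k12: "k1 < k2" using assms by (auto simp: k1_def k2_def)
  have x1: "x1 > 0" and x2: "x2 > 0" using assms k1 k2 by (auto simp: x1_def x2_def)
  have p1: "p1 > 0" and p2: "p2 > 0" using assms k1 k2 x1 x2 by (auto simp: p1_def p2_def)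
  have wsq: "p1 * lam / k1 + p2 * lam / k2 > 0"
    using assms(3) k1 k2 p1 p2 by (intro add_pos_pos divide_pos_pos mult_pos_pos)
  have wpos: "w > 0" using wsq by (simp add: w_def)
  have w2: "w^2 = p1 * lam / k1 + p2 * lam / k2" using wsq unfolding w_def by simp
  have DD: "DD > 0" using k1 k2 p1 p2 by (simp add: DD_def add_pos_pos)
  have XHv: "XH = vector [x1, x2, lam]" by (simp add: XH_def x1_def x2_def k1_def k2_def)
  have a21: "a2 - a1 > 0" using assms(6,7) by simp
  have q1: "x1 / k1 = k1 * (2*lam + a2 - 1) / (a2 - a1)" using k1 by (simp add: x1_def power2_eq_square)
  have q2: "x2 / k2 = k2 * (1 - 2*lam - a1) / (a2 - a1)" using k2 by (simp add: x2_def power2_eq_square)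
  have r1: "x1 / k1^2 = (2*lam + a2 - 1) / (a2 - a1)" using k1 by (simp add: x1_def power2_eq_square)
  have r2: "x2 / k2^2 = (1 - 2*lam - a1) / (a2 - a1)" using k2 by (simp add: x2_def power2_eq_square)
  have e1: "k1 * (2*lam + a2 - 1) + k2 * (1 - 2*lam - a1) = (1 - lam) * (a2 - a1)"
    by (simp add: k1_def k2_def algebra_simps)
  have sumL: "x1 / k1 + x2 / k2 = 1 - lam"
    using a21 by (simp add: q1 q2 add_divide_distrib[symmetric] e1)
  have e2: "(k1 - lam) * (2*lam + a2 - 1) + (k2 - lam) * (1 - 2*lam - a1) = (1 - 2*lam) * (a2 - a1)"
    by (simp add: k1_def k2_def algebra_simps)
  have "(k1 - lam) * x1 / k1^2 + (k2 - lam) * x2 / k2^2 = 1 - 2*lam"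
  proof -
    have "(k1 - lam) * x1 / k1^2 + (k2 - lam) * x2 / k2^2
        = ((k1 - lam) * (2*lam + a2 - 1) + (k2 - lam) * (1 - 2*lam - a1)) / (a2 - a1)"
      by (simp add: r1 r2 add_divide_distrib flip: times_divide_eq_right)
    also have "\<dots> = 1 - 2*lam" using a21 by (simp add: e2)
    finally show ?thesis .
  qed
  then have trz: "1 - 2*lam - (k1 - lam) * x1 / k1^2 - (k2 - lam) * x2 / k2^2 = 0" by simp
  define A where "A = (vector [vector [0,p1,k1], vector[0,p2,-k2], vector[w,0,0]] :: real^3^3)"
  define B where "B = (vector [vector [0,0,1/w], vector [k2/DD, k1/DD, 0], vector [p2/DD, -p1/DD, 0]] :: real^3^3)"
  have AB: "A ** B = mat 1" "B ** A = mat 1"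
    using mat_AB[OF A_def B_def DD_def] DD wpos by auto
  define F where "F = chemo_F d1 d2 lam a1 a2"
  define G where "G = transf A XH F"
  define g1w where "g1w = (\<lambda>y1 y2 z::real. (lam + w*y1) * (1 - (lam + w*y1))
      - (lam + w*y1) / (k1 + w*y1) * (x1 + p1*y2 + k1*z)
      - (lam + w*y1) / (k2 + w*y1) * (x2 + p2*y2 - k2*z))"
  define g1 where "g1 = (\<lambda>y1 y2 z. g1w y1 y2 z / w)"
  define h1 where "h1 = (\<lambda>y1 y2 z::real. d1 * (w*y1) / (k1 + w*y1) * (x1 + p1*y2 + k1*z))"
  define h2 where "h2 = (\<lambda>y1 y2 z::real. d2 * (w*y1) / (k2 + w*y1) * (x2 + p2*y2 - k2*z))"
  define g2 where "g2 = (\<lambda>y1 y2 z. (k2 * h1 y1 y2 z + k1 * h2 y1 y2 z) / DD)"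
  define g3 where "g3 = (\<lambda>y1 y2 z. (p2 * h1 y1 y2 z - p1 * h2 y1 y2 z) / DD)"
  have Xu: "A *v u + XH = vector [x1 + p1*u$2 + k1*u$3, x2 + p2*u$2 - k2*u$3, lam + w*u$1]" for u
    by (simp add: vec_eq_iff forall_3 A_def XHv matrix_vector_mult_def sum_3 algebra_simps)
  have FX: "F (A *v u + XH) = vector [h1 (u$1) (u$2) (u$3), h2 (u$1) (u$2) (u$3),
       g1w (u$1) (u$2) (u$3)]" for u
    unfolding Xu F_def chemo_F_def h1_def h2_def g1w_def
    by (simp add: k1_def k2_def add_ac)
  have Gc: "G u $ 1 = g1 (u$1) (u$2) (u$3)" "G u $ 2 = g2 (u$1) (u$2) (u$3)"
     "G u $ 3 = g3 (u$1) (u$2) (u$3)" for u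
    using wpos unfolding G_def transf_explicit[OF AB] FX g1_def g2_def g3_def
    by (simp_all add: B_def matrix_vector_mult_def sum_3 add_divide_distrib diff_divide_distrib)
  have k1n: "k1 \<noteq> 0" "k2 \<noteq> 0" "w \<noteq> 0" "DD \<noteq> 0" using k1 k2 wpos DD by auto
  have J11l: "dpart 1 (\<lambda>u. G u $ 1) 0 = deriv (\<lambda>t. g1 t 0 0) 0"
    by (simp add: dpart_def Gc axis_comp2)
  have J11d: "((\<lambda>t. g1 t 0 0) has_real_derivative 0) (at 0)"
    unfolding g1_def g1w_def
    apply (rule derivative_eq_intros refl | simp add: k1n)+
    using trz k1n apply (simp add: power2_eq_square field_simps)
    apply (drule arg_cong[where f="\<lambda>z. w*z"]) by (simp add: algebra_simps)
  have J11: "dpart 1 (\<lambda>u. G u $ 1) 0 = 0" using J11l J11d DERIV_imp_deriv by simp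
  have J12: "dpart 2 (\<lambda>u. G u $ 1) 0 = - w"
  proof -
    have "dpart 2 (\<lambda>u. G u $ 1) 0 = deriv (\<lambda>t. g1 0 t 0) 0"
      by (simp add: dpart_def Gc axis_comp2)
    moreover have "((\<lambda>t. g1 0 t 0) has_real_derivative - w) (at 0)"
      unfolding g1_def g1w_def
      apply (rule derivative_eq_intros refl | simp add: k1n)+
    proof -
      have "- (p1 * lam / k1) - p2 * lam / k2 = - (w * w)" using w2 by (simp add: power2_eq_square)
      then show "(- (p1 * lam / k1) - p2 * lam / k2) / w = - w" using k1n by simp
    qed
    ultimately show ?thesis using DERIV_imp_deriv by simp
  qed
  have J13: "dpart 3 (\<lambda>u. G u $ 1) 0 = 0"
  proof -
    have "dpart 3 (\<lambda>u. G u $ 1) 0 = deriv (\<lambda>t. g1 0 0 t) 0"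
      by (simp add: dpart_def Gc axis_comp2)
    moreover have "((\<lambda>t. g1 0 0 t) has_real_derivative 0) (at 0)"
      unfolding g1_def g1w_def
      apply (rule derivative_eq_intros refl | simp add: k1n)+
      done
    ultimately show ?thesis using DERIV_imp_deriv by simp
  qed
  have J21: "dpart 1 (\<lambda>u. G u $ 2) 0 = w"
  proof -
    have "dpart 1 (\<lambda>u. G u $ 2) 0 = deriv (\<lambda>t. g2 t 0 0) 0"
      by (simp add: dpart_def Gc axis_comp2)
    moreover have "((\<lambda>t. g2 t 0 0) has_real_derivative w) (at 0)"
      unfolding g2_def h1_def h2_def
      apply (rule derivative_eq_intros refl | simp add: k1n)+
    proof -
      have "w * d1 * x1 * k2 / k1 + w * d2 * x2 * k1 / k2 = w * DD"
        using k1n by (simp add: DD_def p1_def p2_def field_simps)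
      then show "(w * d1 * x1 * k2 / k1 + w * d2 * x2 * k1 / k2) / DD = w" using k1n by simp
    qed
    ultimately show ?thesis using DERIV_imp_deriv by simp
  qed
  have J31: "dpart 1 (\<lambda>u. G u $ 3) 0 = 0"
  proof -
    have "dpart 1 (\<lambda>u. G u $ 3) 0 = deriv (\<lambda>t. g3 t 0 0) 0"
      by (simp add: dpart_def Gc axis_comp2)
    moreover have "((\<lambda>t. g3 t 0 0) has_real_derivative 0) (at 0)"
      unfolding g3_def h1_def h2_def
      apply (rule derivative_eq_intros refl | simp add: k1n)+
      using k1n by (simp add: p1_def p2_def field_simps)
    ultimately show ?thesis using DERIV_imp_deriv by simp
  qed
  have z2: "g2 0 y z = 0" "g3 0 y z = 0" for y z by (simp_all add: g2_def g3_def h1_def h2_def)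
  have dz: "deriv (\<lambda>t. 0::real) 0 = 0" by (rule DERIV_imp_deriv) simp
  have J22: "dpart j (\<lambda>u. G u $ 2) (t *\<^sub>R axis 3 1) = 0" if "j = 2 \<or> j = 3" for j t
    using that by (auto simp: dpart_def Gc axis_comp2 z2 dz)
  have J32: "dpart j (\<lambda>u. G u $ 3) (t *\<^sub>R axis k 1) = 0" if "j = 2 \<or> j = 3" "k = 2 \<or> k = 3" for j k t
    using that by (auto simp: dpart_def Gc axis_comp2 z2 dz)
  define H1 where "H1 = (\<lambda>t. 1 - 2*lam - (k1 - lam) * (x1 + k1*t) / k1^2 - (k2 - lam) * (x2 - k2*t) / k2^2)"
  have S31a: "dpart 1 (\<lambda>u. G u $ 1) (t *\<^sub>R axis 3 1) = H1 t" for t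
  proof -
    have "dpart 1 (\<lambda>u. G u $ 1) (t *\<^sub>R axis 3 1) = deriv (\<lambda>s. g1 s 0 t) 0"
      by (simp add: dpart_def Gc axis_comp2)
    moreover have "((\<lambda>s. g1 s 0 t) has_real_derivative H1 t) (at 0)"
      unfolding g1_def g1w_def
      apply (rule derivative_eq_intros refl | simp add: k1n)+
      using k1n by (simp add: H1_def power2_eq_square field_simps)
    ultimately show ?thesis using DERIV_imp_deriv by simp
  qed
  have S31: "ipart [3, 1] (\<lambda>u. G u $ 1) 0 = lam / k1 - lam / k2"
  proof -
    have "ipart [3, 1] (\<lambda>u. G u $ 1) 0 = deriv (\<lambda>t. dpart 1 (\<lambda>u. G u $ 1) (0 + t *\<^sub>R axis 3 1)) 0"
      by (simp only: ipart.simps dpart_def[of 3])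
    also have "\<dots> = deriv H1 0" by (simp add: S31a)
    finally have "ipart [3, 1] (\<lambda>u. G u $ 1) 0 = deriv H1 0" .
    moreover have "(H1 has_real_derivative lam / k1 - lam / k2) (at 0)"
      unfolding H1_def
      apply (rule derivative_eq_intros refl | simp add: k1n)+
      using k1n by (simp add: power2_eq_square field_simps) algebra
    ultimately show ?thesis using DERIV_imp_deriv by simp
  qed
  define P where "P = (\<lambda>t. (p2*d1*x1*w*k1/(k1+w*t)^2 - p1*d2*x2*w*k2/(k2+w*t)^2)/DD)"
  define V3 where "V3 = -2*w^2*(p2*d1*x1/k1^2 - p1*d2*x2/k2^2)/DD"
  have S11a: "dpart 1 (\<lambda>u. G u $ 3) (t *\<^sub>R axis 1 1) = P t" if "t \<in> {-k1/w<..}" for t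
  proof -
    have tp: "k1 + w*t > 0" "k2 + w*t > 0" using that wpos k12
      by (simp_all add: field_simps)
    have "dpart 1 (\<lambda>u. G u $ 3) (t *\<^sub>R axis 1 1) = deriv (\<lambda>s. g3 (t + s) 0 0) 0"
      by (simp add: dpart_def Gc axis_comp2 algebra_simps)
    moreover have "((\<lambda>s. g3 (t + s) 0 0) has_real_derivative P t) (at 0)"
      unfolding g3_def h1_def h2_def
      apply (rule derivative_eq_intros refl | simp add: k1n tp tp[THEN less_imp_neq, symmetric])+
      using k1n tp by (simp add: P_def power2_eq_square field_simps)
    ultimately show ?thesis using DERIV_imp_deriv by simp
  qed
  have S11: "ipart [1, 1] (\<lambda>u. G u $ 3) 0 = V3"
  proof -
    have "ipart [1, 1] (\<lambda>u. G u $ 3) 0 = deriv (\<lambda>t. dpart 1 (\<lambda>u. G u $ 3) (0 + t *\<^sub>R axis 1 1)) 0"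
      by (simp only: ipart.simps dpart_def[of 1 "dpart 1 (\<lambda>u. G u $ 3)"])
    moreover have "(P has_real_derivative V3) (at 0)"
      unfolding P_def
      apply (rule derivative_eq_intros refl | simp add: k1n)+
      using k1n by (simp add: V3_def power2_eq_square field_simps) algebra
    then have "((\<lambda>t. dpart 1 (\<lambda>u. G u $ 3) (0 + t *\<^sub>R axis 1 1)) has_real_derivative V3) (at 0)"
      by (rule has_field_derivative_transform_within_open[of _ _ _ "{-k1/w<..}"])
         (use k1 wpos S11a in auto)
    ultimately show ?thesis using DERIV_imp_deriv by simp
  qed
  have I22: "ipart [2, 2] (\<lambda>u. G u $ 3) 0 = 0"
  proof -
    have "ipart [2, 2] (\<lambda>u. G u $ 3) 0 = deriv (\<lambda>t. dpart 2 (\<lambda>u. G u $ 3) (0 + t *\<^sub>R axis 2 1)) 0"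
      by (simp only: ipart.simps dpart_def[of 2 "dpart 2 (\<lambda>u. G u $ 3)"])
    also have "\<dots> = 0" using J32[of 2 2] dz by simp
    finally show ?thesis .
  qed
  have I32: "ipart [3, 2] (\<lambda>u. G u $ 2) 0 = 0"
  proof -
    have "ipart [3, 2] (\<lambda>u. G u $ 2) 0 = deriv (\<lambda>t. dpart 2 (\<lambda>u. G u $ 2) (0 + t *\<^sub>R axis 3 1)) 0"
      by (simp only: ipart.simps dpart_def[of 3 "dpart 2 (\<lambda>u. G u $ 2)"])
    also have "\<dots> = 0" using J22[of 2] dz by simp
    finally show ?thesis .
  qed
  have apos: "lam / k1 - lam / k2 > 0"
    using k1 k12 assms(3) by (simp add: frac_less2)
  have "p2*d1*x1/k1^2 - p1*d2*x2/k2^2 = p1 * p2 * (1/k1 - 1/k2)"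
    using k1n by (simp add: p1_def p2_def power2_eq_square field_simps)
  moreover have "1/k1 - 1/k2 > 0" using k1 k12 by (simp add: frac_less2)
  ultimately have "p2*d1*x1/k1^2 - p1*d2*x2/k2^2 > 0" using p1 p2 by simp
  then have bneg: "V3 < 0" unfolding V3_def using wpos DD
    by (simp add: divide_neg_pos mult_pos_pos)
  have XHL: "XH \<in> chemo_L lam a1 a2"
    using x1 x2 assms(3) sumL by (simp add: chemo_L_def pos3_def XHv k1_def k2_def)
  have FL: "F Y = 0" if "Y \<in> chemo_L lam a1 a2" for Y
  proof -
    have Y: "Y $ 3 = lam" "Y $ 1 / (lam + a1) + Y $ 2 / (lam + a2) = 1 - lam"
      using that by (auto simp: chemo_L_def)
    then have "lam * (Y $ 1 / (lam + a1) + Y $ 2 / (lam + a2)) = lam * (1 - lam)" by simp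
    then show ?thesis
      by (simp add: F_def chemo_F_def vec_eq_iff forall_3 Y algebra_simps)
  qed
  have Lsub: "chemo_L lam a1 a2 \<subseteq> {A *v u + XH | u. u $ 1 = 0 \<and> u $ 2 = 0}"
  proof
    fix Y assume "Y \<in> chemo_L lam a1 a2"
    then have Y: "Y $ 3 = lam" "Y $ 1 / k1 + Y $ 2 / k2 = 1 - lam"
      by (auto simp: chemo_L_def k1_def k2_def)
    define u where "u = (vector [0, 0, (Y $ 1 - x1) / k1] :: real^3)"
    have "Y $ 1 / k1 + Y $ 2 / k2 = x1 / k1 + x2 / k2" using Y sumL by simp
    then have "Y $ 2 = x2 - k2 * ((Y $ 1 - x1) / k1)" using k1n by (simp add: field_simps)
    then have "Y = A *v u + XH"
      unfolding Xu using k1n Y by (simp add: u_def vec_eq_iff forall_3)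
    then show "Y \<in> {A *v u + XH | u. u $ 1 = 0 \<and> u $ 2 = 0}" by (auto simp: u_def)
  qed
  have Gline: "G u = 0" if "u $ 1 = 0" "u $ 2 = 0" for u
  proof -
    have "g1 0 0 z = 0" for z
    proof -
      have e1: "lam / k1 * (x1 + p1 * 0 + k1 * z) = lam * (x1 / k1) + lam * z"
        using k1n by (simp add: field_simps)
      have e2: "lam / k2 * (x2 + p2 * 0 - k2 * z) = lam * (x2 / k2) - lam * z"
        using k1n by (simp add: field_simps)
      have "lam * (1 - lam) - (lam * (x1 / k1) + lam * z) - (lam * (x2 / k2) - lam * z)
          = lam * ((1 - lam) - (x1/k1 + x2/k2))" by (simp add: algebra_simps)
      also have "\<dots> = 0" using sumL by simp
      finally have "lam * (1 - lam) - (lam * (x1 / k1) + lam * z) - (lam * (x2 / k2) - lam * z) = 0" .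
      then show ?thesis unfolding g1_def g1w_def using e1 e2 by simp
    qed
    then show ?thesis using that by (simp add: vec_eq_iff forall_3 Gc z2)
  qed
  have GG: "transf A XH (chemo_F d1 d2 lam a1 a2) = G" by (simp add: G_def F_def)
  have hc: "hopf_coords pos3 (chemo_F d1 d2 lam a1 a2) (chemo_L lam a1 a2) XH A w"
    unfolding hopf_coords_def GG
  proof (intro conjI)
    show "smooth_field_on pos3 (chemo_F d1 d2 lam a1 a2)" using assms(4,5,7) by (intro chemo_smooth) auto
    show "chemo_L lam a1 a2 \<subseteq> pos3" by (auto simp: chemo_L_def)
    show "\<forall>Y\<in>chemo_L lam a1 a2. chemo_F d1 d2 lam a1 a2 Y = 0" using FL by (simp add: F_def)
    show "XH \<in> chemo_L lam a1 a2" by (rule XHL)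
    show "invertible A" unfolding invertible_def using AB by blast
    show "w > 0" by (rule wpos)
    show "chemo_L lam a1 a2 \<subseteq> {A *v u + XH | u. u $ 1 = 0 \<and> u $ 2 = 0}" by (rule Lsub)
    show "\<forall>u. u $ 1 = 0 \<and> u $ 2 = 0 \<longrightarrow> G u = 0" using Gline by blast
    show "\<forall>i j. dpart j (\<lambda>u. G u $ i) 0 = hopf_jac w $ i $ j"
      unfolding forall_3 using J11 J12 J13 J21 J31 J22[of _ 0] J32[of _ 2 0]
      by (simp add: hopf_jac_def)
    show "ipart [3, 1] (\<lambda>u. G u $ 1) 0 + ipart [3, 2] (\<lambda>u. G u $ 2) 0 \<noteq> 0"
      using S31 I32 apos k12 assms(3) by (simp del: ipart.simps)
  qed
  have "elliptic_hopf_point pos3 (chemo_F d1 d2 lam a1 a2) (chemo_L lam a1 a2) XH"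
    unfolding elliptic_hopf_point_def
  proof (intro exI[of _ A] exI[of _ w] conjI hc)
    have "(lam / k1 - lam / k2) * V3 < 0" using apos bneg by (simp add: mult_pos_neg)
    then show "let G = transf A XH (chemo_F d1 d2 lam a1 a2);
          a = ipart [3, 1] (\<lambda>u. G u $ 1) 0 + ipart [3, 2] (\<lambda>u. G u $ 2) 0;
          b = ipart [1, 1] (\<lambda>u. G u $ 3) 0 + ipart [2, 2] (\<lambda>u. G u $ 3) 0
      in b \<noteq> 0 \<and> sgn (a * b) = -1"
      unfolding GG Let_def using S31 I32 S11 I22 bneg k12 assms(3) by (simp del: ipart.simps add: sgn_real_def)
  qed
  then show ?thesis using XHL by blast
qed

end
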